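(* Let $k\ge 1$, $h=3k+1$, and $W\in\mathcal W^2_{h\times 3}$. Let $\ell$ be the number of maximal vertical pillars in the middle column $W^t[2]$. Then $$e(W^t[1])+e(W^t[3])\le 2\big(-k-1/3+\ell-e(W^t[2])\big).$$
   Context: A 2-dimensional binary word of dimensions $h\times w$ is an $h\times w$ matrix with entries in $\{\square,\blacksquare\}$ (filled cells $\blacksquare$, empty cells $\square$); $|U|_\blacksquare$ is the number of filled cells of $U$. Two cells $(i,j),(i',j')$ are adjacent if $|i-i'|+|j-j'|=1$; the degree of a filled cell is the number of filled cells adjacent to it. $\mathcal W^2_{h\times w}$ is the set of $h\times w$ binary words in which every filled cell has degree at most $2$. $W^t[j]$ denotes column $j$ of $W$, viewed as an $h\times 1$ word. The excess of an $a\times b$ word $U$ is $e(U)=|U|_\blacksquare-2ab/3$; for a column of height $h$, $e=|\text{column}|_\blacksquare-2h/3$. A maximal vertical pillar in a column is a maximal run of consecutive filled cells in that column (not contained in a longer run of consecutive filled cells of that column). *)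

theory Defs
  imports Complex_Main
begin

text \<open>A 2-dimensional binary word of dimensions h x w is modelled as a predicate
  W :: nat => nat => bool, where W i j means that cell (i,j) is filled;
  rows are indexed 1..h and columns 1..w; values outside this range are ignored.\<close>

type_synonym word2 = "nat \<Rightarrow> nat \<Rightarrow> bool"

definition cells :: "nat \<Rightarrow> nat \<Rightarrow> (nat \<times> nat) set" where
  "cells h w = {1..h} \<times> {1..w}"

definition filled :: "nat \<Rightarrow> nat \<Rightarrow> word2 \<Rightarrow> (nat \<times> nat) set" where
  "filled h w W = {(i, j) \<in> cells h w. W i j}"

definition adjacent :: "nat \<times> nat \<Rightarrow> nat \<times> nat \<Rightarrow> bool" where
  "adjacent c d \<longleftrightarrow>
     \<bar>int (fst c) - int (fst d)\<bar> + \<bar>int (snd c) - int (snd d)\<bar> = 1"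

definition degree :: "nat \<Rightarrow> nat \<Rightarrow> word2 \<Rightarrow> nat \<times> nat \<Rightarrow> nat" where
  "degree h w W c = card {d \<in> filled h w W. adjacent c d}"

definition W2 :: "nat \<Rightarrow> nat \<Rightarrow> word2 set" where
  "W2 h w = {W. \<forall>c \<in> filled h w W. degree h w W c \<le> 2}"

text \<open>Column j of W, viewed as an h x 1 word (column index 1).\<close>
definition col :: "word2 \<Rightarrow> nat \<Rightarrow> word2" where
  "col W j = (\<lambda>i _. W i j)"

definition num_filled :: "nat \<Rightarrow> nat \<Rightarrow> word2 \<Rightarrow> nat" where
  "num_filled a b U = card (filled a b U)"

definition excess :: "nat \<Rightarrow> nat \<Rightarrow> word2 \<Rightarrow> real" where
  "excess a b U = real (num_filled a b U) - 2 * real a * real b / 3"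

text \<open>Maximal vertical pillars of an h x 1 word U (column 1): maximal runs
  {s..t} of consecutive filled cells, represented by their endpoints (s,t).\<close>
definition max_pillars :: "nat \<Rightarrow> word2 \<Rightarrow> (nat \<times> nat) set" where
  "max_pillars h U = {(s, t). 1 \<le> s \<and> s \<le> t \<and> t \<le> h \<and>
      (\<forall>i \<in> {s..t}. U i 1) \<and>
      (s = 1 \<or> \<not> U (s - 1) 1) \<and> (t = h \<or> \<not> U (t + 1) 1)}"

end

theory Submission
  imports Defs
begin

lemma card_filter_sum:
  "finite A \<Longrightarrow> card {i\<in>A. P i} = (\<Sum>i\<in>A. (if P i then 1 else 0::nat))"
  using sum.inter_filter[of A "\<lambda>_. 1::nat" P] by simp

lemma nf_col:
  "num_filled h 1 (col W j) = card {i\<in>{1..h}. W i j}"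
proof -
  have "filled h 1 (col W j) = (\<lambda>i. (i,1::nat)) ` {i\<in>{1..h}. W i j}"
    by (auto simp: filled_def cells_def col_def)
  moreover have "inj_on (\<lambda>i. (i,1::nat)) {i\<in>{1..h}. W i j}" by (auto simp: inj_on_def)
  ultimately show ?thesis by (simp add: num_filled_def card_image)
qed

lemma row_bound:
  assumes W: "W \<in> W2 h 3" and i: "1 \<le> i" "i \<le> h"
  shows "(if W i 1 then 1 else 0) + (if W i 3 then 1 else 0)
       + (if 1 < i \<and> W (i-1) 2 \<and> W i 2 then 1 else 0)
       + (if i < h \<and> W i 2 \<and> W (Suc i) 2 then 1 else 0) \<le> (2::nat)"
proof (cases "W i 2")
  case False then show ?thesis by simp
next
  case True
  define T where "T = (if W i 1 then {(i,1::nat)} else {}) \<union> (if W i 3 then {(i,3)} else {})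
     \<union> (if 1 < i \<and> W (i-1) 2 then {(i-1,2)} else {}) \<union> (if i < h \<and> W (Suc i) 2 then {(Suc i,2)} else {})"
  have cT: "card T = (if W i 1 then 1 else 0) + (if W i 3 then 1 else 0)
       + (if 1 < i \<and> W (i-1) 2 then 1 else 0)
       + (if i < h \<and> W (Suc i) 2 then 1 else 0)"
    unfolding T_def
    by (cases "W i 1"; cases "W i 3"; cases "1 < i \<and> W (i-1) 2"; cases "i < h \<and> W (Suc i) 2"; auto)
  have sub: "T \<subseteq> {d \<in> filled h 3 W. adjacent (i,2) d}"
    unfolding T_def using i True
    by (auto simp: filled_def cells_def adjacent_def split: if_splits)
  have fin: "finite {d \<in> filled h 3 W. adjacent (i,2) d}"
    by (rule finite_subset[of _ "cells h 3"]) (auto simp: filled_def cells_def)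
  have "card T \<le> degree h 3 W (i,2)"
    unfolding degree_def using card_mono[OF fin sub] .
  also have "\<dots> \<le> 2" using W i True by (auto simp: W2_def filled_def cells_def)
  finally show ?thesis using cT True by simp
qed

lemma starts_le:
  "card {i\<in>{1..h}. W i 2 \<and> \<not> (1 < i \<and> W (i-1) 2)} \<le> card (max_pillars h (col W 2))"
proof -
  define S where "S = {i\<in>{1..h}. W i 2 \<and> \<not> (1 < i \<and> W (i-1) 2)}"
  define en where "en s = Max {t. s \<le> t \<and> t \<le> h \<and> (\<forall>i\<in>{s..t}. W i 2)}" for s
  have mem: "(s, en s) \<in> max_pillars h (col W 2)" if s: "s \<in> S" for s
  proof -
    let ?A = "{t. s \<le> t \<and> t \<le> h \<and> (\<forall>i\<in>{s..t}. W i 2)}"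
    have fA: "finite ?A" by (rule finite_subset[of _ "{..h}"]) auto
    have sA: "s \<in> ?A" using s by (auto simp: S_def)
    have eA: "en s \<in> ?A" unfolding en_def using fA sA by (intro Max_in) auto
    have ge: "t \<le> en s" if "t \<in> ?A" for t unfolding en_def using fA that by (rule Max_ge)
    have "en s = h \<or> \<not> W (en s + 1) 2"
    proof (rule ccontr)
      assume "\<not> ?thesis"
      then have "en s + 1 \<in> ?A" using eA by (auto simp: le_Suc_eq)
      then show False using ge by fastforce
    qed
    then show ?thesis using eA s by (auto simp: S_def max_pillars_def col_def)
  qed
  have fin: "finite (max_pillars h (col W 2))"
    by (rule finite_subset[of _ "{1..h}\<times>{1..h}"]) (auto simp: max_pillars_def)
  have "card S \<le> card (max_pillars h (col W 2))"
    by (rule card_inj_on_le[of "\<lambda>s. (s, en s)"]) (use mem fin in \<open>auto simp: inj_on_def\<close>)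
  then show ?thesis by (simp add: S_def)
qed

theorem mainTheorem11:
  fixes k h :: nat and W :: word2
  assumes "k \<ge> 1" and "h = 3 * k + 1" and "W \<in> W2 h 3"
  shows "excess h 1 (col W 1) + excess h 1 (col W 3)
           \<le> 2 * (- real k - 1/3 + real (card (max_pillars h (col W 2)))
                   - excess h 1 (col W 2))"
proof -
  define a where "a = card {i\<in>{1..h}. W i 1}"
  define c where "c = card {i\<in>{1..h}. W i 3}"
  define b where "b = card {i\<in>{1..h}. W i 2}"
  define st where "st = card {i\<in>{1..h}. W i 2 \<and> \<not> (1 < i \<and> W (i-1) 2)}"
  define Ed where "Ed = card {i\<in>{1..h}. 1 < i \<and> W (i-1) 2 \<and> W i 2}"
  define Eu where "Eu = card {i\<in>{1..h}. i < h \<and> W i 2 \<and> W (Suc i) 2}"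
  have "{i\<in>{1..h}. 1 < i \<and> W (i-1) 2 \<and> W i 2} = Suc ` {i\<in>{1..h}. i < h \<and> W i 2 \<and> W (Suc i) 2}"
  proof (intro set_eqI iffI)
    fix x assume "x \<in> {i\<in>{1..h}. 1 < i \<and> W (i-1) 2 \<and> W i 2}"
    then show "x \<in> Suc ` {i\<in>{1..h}. i < h \<and> W i 2 \<and> W (Suc i) 2}"
      by (intro image_eqI[of x Suc "x-1"]) auto
  next
    fix x assume "x \<in> Suc ` {i\<in>{1..h}. i < h \<and> W i 2 \<and> W (Suc i) 2}"
    then show "x \<in> {i\<in>{1..h}. 1 < i \<and> W (i-1) 2 \<and> W i 2}" by auto
  qed
  then have EE: "Ed = Eu" unfolding Ed_def Eu_def by (simp add: card_image)
  have un: "{i\<in>{1..h}. W i 2} = {i\<in>{1..h}. W i 2 \<and> \<not> (1 < i \<and> W (i-1) 2)} \<union> {i\<in>{1..h}. 1 < i \<and> W (i-1) 2 \<and> W i 2}"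
    by auto
  have "card ({i\<in>{1..h}. W i 2 \<and> \<not> (1 < i \<and> W (i-1) 2)} \<union> {i\<in>{1..h}. 1 < i \<and> W (i-1) 2 \<and> W i 2})
     = st + Ed" unfolding st_def Ed_def by (rule card_Un_disjoint) auto
  then have bs: "b = st + Ed" unfolding b_def un .
  have "(\<Sum>i\<in>{1..h}. (if W i 1 then 1 else 0) + (if W i 3 then 1 else 0)
       + (if 1 < i \<and> W (i-1) 2 \<and> W i 2 then 1 else 0)
       + (if i < h \<and> W i 2 \<and> W (Suc i) 2 then 1 else 0)) \<le> (\<Sum>i\<in>{1..h}. (2::nat))"
    by (rule sum_mono) (use row_bound[OF assms(3)] in auto)
  note sm = this
  have "a + c + Ed + Eu \<le> 2 * h"
    using sm[unfolded sum.distrib] unfolding a_def c_def Ed_def Eu_def card_filter_sum[OF finite_atLeastAtMost]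
    by simp
  moreover have "st \<le> card (max_pillars h (col W 2))" unfolding st_def by (rule starts_le)
  ultimately have key: "real a + real c + 2 * real b \<le> 2 * real h + 2 * real (card (max_pillars h (col W 2)))"
    using bs EE by linarith
  show ?thesis
    unfolding excess_def nf_col using key assms(2)
    by (simp add: a_def b_def c_def field_simps)
qed

end
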